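(* If either $m\ge 3$ and $k\ge 3$, or $m=2$ and $k\ge 4$, then the Spencer operator $\mathcal S^2\colon\operatorname{Hom}(\wedge^2V,\mathfrak a)\to\operatorname{Hom}(\wedge^3V,V)$ is injective.
   Context: $\mathfrak a=\mathfrak{sl}(2,\mathbb R)\times\mathfrak{gl}(m,\mathbb R)$ acting faithfully on $V=V_k\otimes W$, where $V_k=S^k(\mathbb R^2)$ is the irreducible $(k+1)$-dimensional $\mathfrak{sl}(2,\mathbb R)$-module and $W=\mathbb R^m$ the standard $\mathfrak{gl}(m,\mathbb R)$-module. $\mathcal S^2(\phi)(v_1\wedge v_2\wedge v_3)=-\phi(v_2\wedge v_3)v_1+\phi(v_1\wedge v_3)v_2-\phi(v_1\wedge v_2)v_3$. *)

theory Defs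
  imports Complex_Main
begin

text \<open>
V_k = S^k(R^2) has basis the monomials x^(k-i) y^i, i = 0..k; W = R^m has basis e_r, r < m.
An element of V = V_k (x) W is a function v :: nat => nat => real, v i r being the
coefficient of x^(k-i) y^i (x) e_r, vanishing outside i <= k, r < m.
An element of sl(2,R) is a 2x2 matrix X (indices 0,1) of trace zero, an element of gl(m,R)
an m x m matrix A (indices < m); an element of a is the pair (X, A).
\<close>

type_synonym vec = "nat \<Rightarrow> nat \<Rightarrow> real"
type_synonym mat = "nat \<Rightarrow> nat \<Rightarrow> real"
type_synonym alg = "mat \<times> mat"

definition inV :: "nat \<Rightarrow> nat \<Rightarrow> vec \<Rightarrow> bool" where
  "inV k m v \<longleftrightarrow> (\<forall>i r. (k < i \<or> m \<le> r) \<longrightarrow> v i r = 0)"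

definition in_sl2 :: "mat \<Rightarrow> bool" where
  "in_sl2 X \<longleftrightarrow> (\<forall>i j. (1 < i \<or> 1 < j) \<longrightarrow> X i j = 0) \<and> X 0 0 + X 1 1 = 0"

definition in_gl :: "nat \<Rightarrow> mat \<Rightarrow> bool" where
  "in_gl m A \<longleftrightarrow> (\<forall>i j. (m \<le> i \<or> m \<le> j) \<longrightarrow> A i j = 0)"

definition in_alg :: "nat \<Rightarrow> alg \<Rightarrow> bool" where
  "in_alg m xa \<longleftrightarrow> in_sl2 (fst xa) \<and> in_gl m (snd xa)"

definition alg_zero :: alg where
  "alg_zero = ((\<lambda>_ _. 0), (\<lambda>_ _. 0))"

definition vec_zero :: vec where
  "vec_zero = (\<lambda>_ _. 0)"

text \<open>Action of sl(2,R) on V_k = S^k(R^2) (extension as a derivation of the standard action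
X e1 = X00 e1 + X10 e2, X e2 = X01 e1 + X11 e2), tensored with the standard action of gl(m,R).\<close>
definition act :: "nat \<Rightarrow> nat \<Rightarrow> alg \<Rightarrow> vec \<Rightarrow> vec" where
  "act k m xa v = (\<lambda>i r. if i \<le> k \<and> r < m then
       fst xa 0 0 * (real k - 2 * real i) * v i r
     + (if 1 \<le> i then fst xa 1 0 * (real k - real i + 1) * v (i - 1) r else 0)
     + (if i < k then fst xa 0 1 * (real i + 1) * v (i + 1) r else 0)
     + (\<Sum>s<m. snd xa r s * v i s)
     else 0)"

text \<open>Hom(wedge^2 V, a), realised as alternating bilinear maps V x V -> a
(extended by zero outside V x V).\<close>
definition Hom2 :: "nat \<Rightarrow> nat \<Rightarrow> (vec \<Rightarrow> vec \<Rightarrow> alg) set" where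
  "Hom2 k m = {\<phi>.
     (\<forall>v w. inV k m v \<and> inV k m w \<longrightarrow> in_alg m (\<phi> v w)) \<and>
     (\<forall>v w. \<not> (inV k m v \<and> inV k m w) \<longrightarrow> \<phi> v w = alg_zero) \<and>
     (\<forall>v w u c. inV k m v \<and> inV k m w \<and> inV k m u \<longrightarrow>
        \<phi> (\<lambda>i r. c * v i r + w i r) u =
          ((\<lambda>i j. c * fst (\<phi> v u) i j + fst (\<phi> w u) i j),
           (\<lambda>i j. c * snd (\<phi> v u) i j + snd (\<phi> w u) i j))) \<and>
     (\<forall>v w u c. inV k m v \<and> inV k m w \<and> inV k m u \<longrightarrow>
        \<phi> u (\<lambda>i r. c * v i r + w i r) =
          ((\<lambda>i j. c * fst (\<phi> u v) i j + fst (\<phi> u w) i j),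
           (\<lambda>i j. c * snd (\<phi> u v) i j + snd (\<phi> u w) i j))) \<and>
     (\<forall>v. inV k m v \<longrightarrow> \<phi> v v = alg_zero)}"

definition S2 :: "nat \<Rightarrow> nat \<Rightarrow> (vec \<Rightarrow> vec \<Rightarrow> alg) \<Rightarrow> vec \<Rightarrow> vec \<Rightarrow> vec \<Rightarrow> vec" where
  "S2 k m \<phi> v1 v2 v3 =
     (if inV k m v1 \<and> inV k m v2 \<and> inV k m v3 then
        (\<lambda>i r. - act k m (\<phi> v2 v3) v1 i r + act k m (\<phi> v1 v3) v2 i r
               - act k m (\<phi> v1 v2) v3 i r)
      else vec_zero)"

end

theory Submission
  imports Defs
begin


definition ev :: "nat \<Rightarrow> nat \<Rightarrow> vec" where
  "ev l c = (\<lambda>i r. if i = l \<and> r = c then 1 else 0)"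

lemma sum_ev: "c < m \<Longrightarrow> (\<Sum>s<m. A r s * ev l c i s) = (if i = l then A r c else 0)"
  unfolding ev_def by (simp add: if_distrib[of "\<lambda>x. _ * x"] sum.delta cong: if_cong)

lemma act_e:
  assumes "l \<le> k" "c < m"
  shows "act k m xa (ev l c) i r = (if i \<le> k \<and> r < m then
     (if i = l \<and> r = c then fst xa 0 0 * (real k - 2 * real i) else 0)
   + (if i = l + 1 \<and> r = c then fst xa 1 0 * (real k - real l) else 0)
   + (if i + 1 = l \<and> r = c then fst xa 0 1 * real l else 0)
   + (if i = l then snd xa r c else 0) else 0)"
  using assms unfolding act_def
  apply (simp only: sum_ev)
  apply (auto simp: ev_def)
  done


definition Bian :: "nat \<Rightarrow> nat \<Rightarrow> (nat \<Rightarrow> nat \<Rightarrow> nat \<Rightarrow> nat \<Rightarrow> alg) \<Rightarrow> bool" where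
 "Bian k m G \<longleftrightarrow> (\<forall>i a j b l c i' r'. i\<le>k \<longrightarrow> a<m \<longrightarrow> j\<le>k \<longrightarrow> b<m \<longrightarrow> l\<le>k \<longrightarrow> c<m \<longrightarrow> i'\<le>k \<longrightarrow> r'<m \<longrightarrow>
    act k m (G j b l c) (ev i a) i' r' - act k m (G i a l c) (ev j b) i' r' + act k m (G i a j b) (ev l c) i' r' = 0)"

lemma E_step:
  assumes B: "Bian k m G" and "i\<le>k" "j\<le>k" "a<m" "b<m" "c<m" "l<k" "l+1\<noteq>i" "l+1\<noteq>j"
    "c=a \<longrightarrow> (l\<noteq>i \<and> l+2\<noteq>i)" "c=b \<longrightarrow> (l\<noteq>j \<and> l+2\<noteq>j)"
  shows "fst (G i a j b) 1 0 = 0"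
proof -
  have "act k m (G j b l c) (ev i a) (l+1) c - act k m (G i a l c) (ev j b) (l+1) c + act k m (G i a j b) (ev l c) (l+1) c = 0"
    using B assms unfolding Bian_def by auto
  then have "fst (G i a j b) 1 0 * (real k - real l) = 0"
    using assms by (auto simp: act_e)
  then show ?thesis using assms by auto
qed

lemma F_step:
  assumes B: "Bian k m G" and "i\<le>k" "j\<le>k" "a<m" "b<m" "c<m" "n+1\<le>k" "n\<noteq>i" "n\<noteq>j"
    "c=a \<longrightarrow> (n\<noteq>i+1 \<and> n+1\<noteq>i)" "c=b \<longrightarrow> (n\<noteq>j+1 \<and> n+1\<noteq>j)"
  shows "fst (G i a j b) 0 1 = 0"
proof -
  have "act k m (G j b (n+1) c) (ev i a) n c - act k m (G i a (n+1) c) (ev j b) n c + act k m (G i a j b) (ev (n+1) c) n c = 0"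
    using B assms unfolding Bian_def by auto
  then have "fst (G i a j b) 0 1 * (real n + 1) = 0"
    using assms by (auto simp: act_e)
  then show ?thesis using assms by (auto simp: add_nonneg_eq_0_iff)
qed

lemma HA_step:
  assumes B: "Bian k m G" and "i\<le>k" "j\<le>k" "a<m" "b<m" "c<m" "d<m" "l\<le>k" "l\<noteq>i" "l\<noteq>j"
   and EF: "\<And>i a j b. i\<le>k \<Longrightarrow> j\<le>k \<Longrightarrow> a<m \<Longrightarrow> b<m \<Longrightarrow> fst (G i a j b) 1 0 = 0 \<and> fst (G i a j b) 0 1 = 0"
  shows "(if d = c then fst (G i a j b) 0 0 * (real k - 2 * real l) else 0) + snd (G i a j b) d c = 0"
proof -
  have "act k m (G j b l c) (ev i a) l d - act k m (G i a l c) (ev j b) l d + act k m (G i a j b) (ev l c) l d = 0"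
    using B assms unfolding Bian_def by auto
  moreover have z: "fst (G j b l c) 1 0 = 0" "fst (G j b l c) 0 1 = 0"
    using EF[of j l b c] assms by auto
  moreover have z2: "fst (G i a l c) 1 0 = 0" "fst (G i a l c) 0 1 = 0"
    using EF[of i l a c] assms by auto
  ultimately show ?thesis
    using assms by (simp add: act_e z z2 split: if_splits)
qed


lemma exE2: "4 \<le> (k::nat) \<Longrightarrow> i \<le> k \<Longrightarrow> j \<le> k \<Longrightarrow>
  \<exists>l<k. (l+1\<noteq>i \<and> l+1\<noteq>j \<and> l\<noteq>i \<and> l+2\<noteq>i) \<or> (l+1\<noteq>i \<and> l+1\<noteq>j \<and> l\<noteq>j \<and> l+2\<noteq>j)"
  by presburger

lemma exF2: "4 \<le> (k::nat) \<Longrightarrow> i \<le> k \<Longrightarrow> j \<le> k \<Longrightarrow>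
  \<exists>n. n+1\<le>k \<and> ((n\<noteq>i \<and> n\<noteq>j \<and> n\<noteq>i+1 \<and> n+1\<noteq>i) \<or> (n\<noteq>i \<and> n\<noteq>j \<and> n\<noteq>j+1 \<and> n+1\<noteq>j))"
  by presburger

lemma exE1: "3 \<le> (k::nat) \<Longrightarrow> \<exists>l<k. l+1\<noteq>i \<and> l+1\<noteq>j"
  by presburger

lemma exF1: "3 \<le> (k::nat) \<Longrightarrow> \<exists>n. n+1\<le>k \<and> n\<noteq>i \<and> n\<noteq>j"
  by presburger

lemma exHA: "3 \<le> (k::nat) \<Longrightarrow> \<exists>l1 l2. l1 \<le> k \<and> l2 \<le> k \<and> l1 \<noteq> l2 \<and> l1\<noteq>i \<and> l1\<noteq>j \<and> l2\<noteq>i \<and> l2\<noteq>j"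
  by presburger

lemma exc: "3 \<le> (m::nat) \<Longrightarrow> \<exists>c<m. c \<noteq> a \<and> c \<noteq> b"
  by presburger

lemma core:
  assumes B: "Bian k m G" and km: "(3 \<le> m \<and> 3 \<le> k) \<or> (m = 2 \<and> 4 \<le> k)"
    and IA: "\<And>i a j b. i\<le>k \<Longrightarrow> j\<le>k \<Longrightarrow> a<m \<Longrightarrow> b<m \<Longrightarrow> in_alg m (G i a j b)"
    and v: "i\<le>k" "j\<le>k" "a<m" "b<m"
  shows "G i a j b = alg_zero"
proof -
  have k3: "3 \<le> k" using km by auto
  have EF: "fst (G i a j b) 1 0 = 0 \<and> fst (G i a j b) 0 1 = 0"
    if vv: "i\<le>k" "j\<le>k" "a<m" "b<m" for i a j b
  proof (cases "\<exists>c<m. c \<noteq> a \<and> c \<noteq> b")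
    case True
    then obtain c where c: "c<m" "c\<noteq>a" "c\<noteq>b" by auto
    obtain l where l: "l<k" "l+1\<noteq>i" "l+1\<noteq>j" using exE1[OF k3] by blast
    obtain n where n: "n+1\<le>k" "n\<noteq>i" "n\<noteq>j" using exF1[OF k3] by blast
    have "fst (G i a j b) 1 0 = 0"
      by (rule E_step[OF B vv(1,2,3,4) c(1) l]) (simp_all add: c(2,3))
    moreover have "fst (G i a j b) 0 1 = 0"
      by (rule F_step[OF B vv(1,2,3,4) c(1) n]) (simp_all add: c(2,3))
    ultimately show ?thesis by simp
  next
    case False
    have m2: "m = 2" using km False exc[of m a b] by auto
    have ab: "a \<noteq> b"
    proof
      assume "a = b"
      then have "1 - a < m \<and> 1 - a \<noteq> a \<and> 1 - a \<noteq> b" using m2 vv by (auto; presburger)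
      then show False using False by blast
    qed
    have k4: "4 \<le> k" using km m2 by auto
    have E: "fst (G i a j b) 1 0 = 0"
    proof -
      obtain l where l: "l<k" and
        h: "(l+1\<noteq>i \<and> l+1\<noteq>j \<and> l\<noteq>i \<and> l+2\<noteq>i) \<or> (l+1\<noteq>i \<and> l+1\<noteq>j \<and> l\<noteq>j \<and> l+2\<noteq>j)"
        using exE2[OF k4 vv(1,2)] by blast
      from h show ?thesis
      proof
        assume h1: "l+1\<noteq>i \<and> l+1\<noteq>j \<and> l\<noteq>i \<and> l+2\<noteq>i"
        show ?thesis by (rule E_step[OF B vv(1,2,3,4) vv(3) l]) (use h1 ab in simp_all)
      next
        assume h1: "l+1\<noteq>i \<and> l+1\<noteq>j \<and> l\<noteq>j \<and> l+2\<noteq>j"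
        show ?thesis by (rule E_step[OF B vv(1,2,3,4) vv(4) l]) (use h1 ab in simp_all)
      qed
    qed
    have F: "fst (G i a j b) 0 1 = 0"
    proof -
      obtain n where n: "n+1\<le>k" and
        h: "(n\<noteq>i \<and> n\<noteq>j \<and> n\<noteq>i+1 \<and> n+1\<noteq>i) \<or> (n\<noteq>i \<and> n\<noteq>j \<and> n\<noteq>j+1 \<and> n+1\<noteq>j)"
        using exF2[OF k4 vv(1,2)] by blast
      from h show ?thesis
      proof
        assume h1: "n\<noteq>i \<and> n\<noteq>j \<and> n\<noteq>i+1 \<and> n+1\<noteq>i"
        show ?thesis by (rule F_step[OF B vv(1,2,3,4) vv(3) n]) (use h1 ab in simp_all)
      next
        assume h1: "n\<noteq>i \<and> n\<noteq>j \<and> n\<noteq>j+1 \<and> n+1\<noteq>j"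
        show ?thesis by (rule F_step[OF B vv(1,2,3,4) vv(4) n]) (use h1 ab in simp_all)
      qed
    qed
    show ?thesis using E F by auto
  qed
  obtain l1 l2 where L: "l1 \<le> k" "l2 \<le> k" "l1 \<noteq> l2" "l1\<noteq>i" "l1\<noteq>j" "l2\<noteq>i" "l2\<noteq>j"
    using exHA[OF k3, of i j] by blast
  have HA: "(if d = c then fst (G i a j b) 0 0 * (real k - 2 * real l) else 0) + snd (G i a j b) d c = 0"
    if "c<m" "d<m" "l\<le>k" "l\<noteq>i" "l\<noteq>j" for c d l
    using HA_step[OF B v(1,2,3,4) that(1,2,3,4,5)] EF by blast
  have H: "fst (G i a j b) 0 0 = 0"
  proof -
    have "0 < m" using v by auto
    have h1: "fst (G i a j b) 0 0 * (real k - 2 * real l1) + snd (G i a j b) 0 0 = 0"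
      using HA[OF \<open>0<m\<close> \<open>0<m\<close> L(1,4,5)] by simp
    have h2: "fst (G i a j b) 0 0 * (real k - 2 * real l2) + snd (G i a j b) 0 0 = 0"
      using HA[OF \<open>0<m\<close> \<open>0<m\<close> L(2,6,7)] by simp
    have "fst (G i a j b) 0 0 * (real k - 2 * real l1) = fst (G i a j b) 0 0 * (real k - 2 * real l2)"
      using h1 h2 by linarith
    then have "fst (G i a j b) 0 0 * (2 * real l2 - 2 * real l1) = 0" by (simp add: algebra_simps)
    then show ?thesis using L(3) by auto
  qed
  have A: "snd (G i a j b) d c = 0" if "c<m" "d<m" for c d
    using HA[OF that L(1,4,5)] H by (auto split: if_splits)
  have ia: "in_alg m (G i a j b)" using IA v by auto
  show ?thesis
    unfolding alg_zero_def prod_eq_iff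
  proof
    show "fst (G i a j b) = fst ((\<lambda>_ _. 0::real), (\<lambda>_ _. 0::real))"
    proof (intro ext)
      fix x y
      show "fst (G i a j b) x y = fst ((\<lambda>_ _. 0::real), (\<lambda>_ _. 0::real)) x y"
        using ia H EF[OF v] unfolding in_alg_def in_sl2_def
        by (cases "x \<le> 1 \<and> y \<le> 1") (auto simp: le_Suc_eq)
    qed
    show "snd (G i a j b) = snd ((\<lambda>_ _. 0::real), (\<lambda>_ _. 0::real))"
    proof (intro ext)
      fix x y
      show "snd (G i a j b) x y = snd ((\<lambda>_ _. 0::real), (\<lambda>_ _. 0::real)) x y"
        using ia A unfolding in_alg_def in_gl_def
        by (cases "x < m \<and> y < m") auto
    qed
  qed
qed


lemma inV_ev: "l \<le> k \<Longrightarrow> c < m \<Longrightarrow> inV k m (ev l c)"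
  unfolding inV_def ev_def by auto

lemma span_induct:
  assumes m0: "0 < m"
    and base: "\<And>l c. l \<le> k \<Longrightarrow> c < m \<Longrightarrow> P (ev l c)"
    and step: "\<And>v w c. inV k m v \<Longrightarrow> inV k m w \<Longrightarrow> P v \<Longrightarrow> P w \<Longrightarrow> P (\<lambda>i r. c * v i r + w i r)"
    and v: "inV k m v"
  shows "P v"
proof -
  have zero: "P (\<lambda>i r. 0)"
  proof -
    have e: "inV k m (ev 0 0)" by (rule inV_ev) (use m0 in auto)
    have pe: "P (ev 0 0)" using base m0 by auto
    have "P (\<lambda>i r. (-1) * ev 0 0 i r + ev 0 0 i r)"
      using step[OF e e pe pe, of "-1"] by simp
    then show ?thesis by simp
  qed
  have "S \<subseteq> {..k} \<times> {..<m} \<Longrightarrow> P (\<lambda>i r. if (i, r) \<in> S then v i r else 0)" for S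
  proof (induction S rule: infinite_finite_induct)
    case (infinite S)
    have "finite S" using finite_subset[OF infinite(2)] by simp
    then show ?case using infinite by simp
  next
    case empty
    then show ?case using zero by simp
  next
    case (insert p S)
    obtain l c where p: "p = (l, c)" by (cases p)
    have lc: "l \<le> k" "c < m" using insert p by auto
    have iS: "inV k m (\<lambda>i r. if (i, r) \<in> S then v i r else 0)"
      using insert unfolding inV_def by auto
    have "P (\<lambda>i r. v l c * ev l c i r + (if (i, r) \<in> S then v i r else 0))"
      by (rule step[OF inV_ev[OF lc] iS base[OF lc]]) (use insert in auto)
    moreover have "(\<lambda>i r. v l c * ev l c i r + (if (i, r) \<in> S then v i r else 0)) =
        (\<lambda>i r. if (i, r) \<in> insert p S then v i r else 0)"
      using insert p by (auto simp: ev_def fun_eq_iff)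
    ultimately show ?case by simp
  qed
  from this[of "{..k} \<times> {..<m}"] have "P (\<lambda>i r. if (i, r) \<in> {..k} \<times> {..<m} then v i r else 0)" by simp
  moreover have "(\<lambda>i r. if (i, r) \<in> {..k} \<times> {..<m} then v i r else 0) = v"
    using v unfolding inV_def by (auto simp: fun_eq_iff not_le)
  ultimately show ?thesis by simp
qed

lemma act_diff:
  "act k m ((\<lambda>x y. fst p x y - fst q x y), (\<lambda>x y. snd p x y - snd q x y)) v i r =
   act k m p v i r - act k m q v i r"
  unfolding act_def by (simp add: algebra_simps sum_subtractf)

theorem lemma4:
  fixes k m :: nat
  assumes "(3 \<le> m \<and> 3 \<le> k) \<or> (m = 2 \<and> 4 \<le> k)"
  shows "inj_on (S2 k m) (Hom2 k m)"
proof (rule inj_onI)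
  fix \<phi> \<psi> assume hp: "\<phi> \<in> Hom2 k m" and hq: "\<psi> \<in> Hom2 k m" and eq: "S2 k m \<phi> = S2 k m \<psi>"
  have m0: "0 < m" using assms by auto
  note hpc = hp[unfolded Hom2_def mem_Collect_eq]
  note hqc = hq[unfolded Hom2_def mem_Collect_eq]
  define G where "G i a j b = ((\<lambda>x y. fst (\<phi> (ev i a) (ev j b)) x y - fst (\<psi> (ev i a) (ev j b)) x y),
      (\<lambda>x y. snd (\<phi> (ev i a) (ev j b)) x y - snd (\<psi> (ev i a) (ev j b)) x y))" for i a j b
  have IA: "in_alg m (G i a j b)" if "i\<le>k" "j\<le>k" "a<m" "b<m" for i a j b
  proof -
    have "in_alg m (\<phi> (ev i a) (ev j b))" "in_alg m (\<psi> (ev i a) (ev j b))"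
      using hp hq inV_ev that unfolding Hom2_def by auto
    then show ?thesis unfolding G_def in_alg_def in_sl2_def in_gl_def by auto
  qed
  have B: "Bian k m G"
    unfolding Bian_def
  proof (intro allI impI)
    fix i a j b l c i' r'
    assume v: "i\<le>k" "a<m" "j\<le>k" "b<m" "l\<le>k" "c<m" "i'\<le>k" "r'<m"
    have "S2 k m \<phi> (ev i a) (ev j b) (ev l c) i' r' = S2 k m \<psi> (ev i a) (ev j b) (ev l c) i' r'"
      using eq by simp
    then have "- act k m (\<phi> (ev j b) (ev l c)) (ev i a) i' r' + act k m (\<phi> (ev i a) (ev l c)) (ev j b) i' r'
               - act k m (\<phi> (ev i a) (ev j b)) (ev l c) i' r' =
               - act k m (\<psi> (ev j b) (ev l c)) (ev i a) i' r' + act k m (\<psi> (ev i a) (ev l c)) (ev j b) i' r'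
               - act k m (\<psi> (ev i a) (ev j b)) (ev l c) i' r'"
      using v by (simp add: S2_def inV_ev)
    then show "act k m (G j b l c) (ev i a) i' r' - act k m (G i a l c) (ev j b) i' r' + act k m (G i a j b) (ev l c) i' r' = 0"
      unfolding G_def act_diff by linarith
  qed
  have base: "\<phi> (ev i a) (ev j b) = \<psi> (ev i a) (ev j b)" if "i\<le>k" "j\<le>k" "a<m" "b<m" for i a j b
  proof -
    have "G i a j b = alg_zero" by (rule core[OF B assms IA that])
    then have "fst (\<phi> (ev i a) (ev j b)) = fst (\<psi> (ev i a) (ev j b))"
          "snd (\<phi> (ev i a) (ev j b)) = snd (\<psi> (ev i a) (ev j b))"
      unfolding G_def alg_zero_def by (auto simp: fun_eq_iff)
    then show ?thesis by (simp add: prod_eq_iff)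
  qed
  have lin1: "\<phi> (\<lambda>i r. c * v i r + w i r) u = ((\<lambda>i j. c * fst (\<phi> v u) i j + fst (\<phi> w u) i j),
           (\<lambda>i j. c * snd (\<phi> v u) i j + snd (\<phi> w u) i j))"
    "\<psi> (\<lambda>i r. c * v i r + w i r) u = ((\<lambda>i j. c * fst (\<psi> v u) i j + fst (\<psi> w u) i j),
           (\<lambda>i j. c * snd (\<psi> v u) i j + snd (\<psi> w u) i j))"
    if "inV k m v" "inV k m w" "inV k m u" for v w u c
    using hpc[THEN conjunct2, THEN conjunct2, THEN conjunct1, rule_format, of v w u c]
      hqc[THEN conjunct2, THEN conjunct2, THEN conjunct1, rule_format, of v w u c] that by auto
  have lin2: "\<phi> u (\<lambda>i r. c * v i r + w i r) = ((\<lambda>i j. c * fst (\<phi> u v) i j + fst (\<phi> u w) i j),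
           (\<lambda>i j. c * snd (\<phi> u v) i j + snd (\<phi> u w) i j))"
    "\<psi> u (\<lambda>i r. c * v i r + w i r) = ((\<lambda>i j. c * fst (\<psi> u v) i j + fst (\<psi> u w) i j),
           (\<lambda>i j. c * snd (\<psi> u v) i j + snd (\<psi> u w) i j))"
    if "inV k m v" "inV k m w" "inV k m u" for v w u c
    using hpc[THEN conjunct2, THEN conjunct2, THEN conjunct2, THEN conjunct1, rule_format, of v w u c]
      hqc[THEN conjunct2, THEN conjunct2, THEN conjunct2, THEN conjunct1, rule_format, of v w u c] that by auto
  have st1: "\<phi> v (ev j b) = \<psi> v (ev j b)" if "inV k m v" "j\<le>k" "b<m" for v j b
    using m0 _ _ that(1)
  proof (rule span_induct[where P = "\<lambda>v. \<phi> v (ev j b) = \<psi> v (ev j b)"])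
    show "\<phi> (ev l c) (ev j b) = \<psi> (ev l c) (ev j b)" if "l \<le> k" "c < m" for l c
      using base that \<open>j\<le>k\<close> \<open>b<m\<close> by blast
    show "\<phi> (\<lambda>i r. c * v i r + w i r) (ev j b) = \<psi> (\<lambda>i r. c * v i r + w i r) (ev j b)"
      if "inV k m v" "inV k m w" "\<phi> v (ev j b) = \<psi> v (ev j b)" "\<phi> w (ev j b) = \<psi> w (ev j b)" for v w c
      using lin1[OF that(1,2) inV_ev[OF \<open>j\<le>k\<close> \<open>b<m\<close>]] that(3,4) by simp
  qed
  have st2: "\<phi> v w = \<psi> v w" if "inV k m v" "inV k m w" for v w
    using m0 _ _ that(2)
  proof (rule span_induct[where P = "\<lambda>w. \<phi> v w = \<psi> v w"])
    show "\<phi> v (ev l c) = \<psi> v (ev l c)" if "l \<le> k" "c < m" for l c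
      using st1 that \<open>inV k m v\<close> by blast
    show "\<phi> v (\<lambda>i r. c * w i r + u i r) = \<psi> v (\<lambda>i r. c * w i r + u i r)"
      if "inV k m w" "inV k m u" "\<phi> v w = \<psi> v w" "\<phi> v u = \<psi> v u" for w u c
      using lin2[OF that(1,2) \<open>inV k m v\<close>] that(3,4) by simp
  qed
  show "\<phi> = \<psi>"
  proof (intro ext)
    fix v w
    show "\<phi> v w = \<psi> v w"
    proof (cases "inV k m v \<and> inV k m w")
      case True then show ?thesis using st2 by blast
    next
      case False then show ?thesis
        using hpc[THEN conjunct2, THEN conjunct1, rule_format, of v w]
          hqc[THEN conjunct2, THEN conjunct1, rule_format, of v w] by simp
    qed
  qed
qed

end
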